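(* Let $q\ge 2$, $n\ge 1$, let $\mathcal C\subseteq \triangle_n^{q-1}$ be a multiset code, let $h_{\rm ins},h_{\rm del},h_{\rm sub}$ be non-negative integers and set $h=h_{\rm ins}+h_{\rm del}+2h_{\rm sub}$. The following are equivalent: (a) $\mathcal C$ can correct $h_{\rm ins}$ insertions, $h_{\rm del}$ deletions and $h_{\rm sub}$ substitutions; (b) $\mathcal C$ can correct $h$ insertions; (c) $\mathcal C$ can correct $h$ deletions.
   Context: Alphabet $[q]=\{0,1,\dots,q-1\}$, $q\ge2$. A multiset over $[q]$ is identified with its multiplicity vector $\mathbf x=(x_0,\dots,x_{q-1})\in\mathbb Z^q$, $x_i$ = number of copies of symbol $i$. $\triangle_n^{q-1}=\{\mathbf x\in\mathbb Z^q: x_i\ge0,\ \sum_{i=0}^{q-1}x_i=n\}$ (multisets of cardinality $n$). A multiset code of length $n$ over $[q]$ is a subset of $\triangle_n^{q-1}$ with at least two elements. Errors act on the multiset: a deletion removes one element present in the multiset (i.e. $\mathbf x\mapsto \mathbf x-\mathbf e_i$ for some $i$ with current multiplicity $\ge1$), an insertion adds one symbol $i\in[q]$ ($\mathbf x\mapsto\mathbf x+\mathbf e_i$), a substitution replaces one present element $i$ by a symbol $j$ ($\mathbf x\mapsto \mathbf x-\mathbf e_i+\mathbf e_j$); $\mathbf e_i$ is the $i$-th unit vector. A code can correct $a$ insertions, $b$ deletions and $c$ substitutions if no two distinct codewords can yield the same output multiset after being impaired by arbitrary patterns of at most $a$ insertions, at most $b$ deletions and at most $c$ substitutions; "correct $h$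 deletions" means the case $a=c=0,b=h$, and similarly for insertions. *)

theory Defs
  imports Main
begin

text \<open>A multiset over the alphabet [q] = {0,..,q-1} is represented by its multiplicity
vector, a list of naturals of length q (entry i = multiplicity of symbol i).\<close>

definition simplex :: "nat \<Rightarrow> nat \<Rightarrow> nat list set" where
  "simplex q n = {x. length x = q \<and> sum_list x = n}"

definition multiset_code :: "nat \<Rightarrow> nat \<Rightarrow> nat list set \<Rightarrow> bool" where
  "multiset_code q n C \<longleftrightarrow> C \<subseteq> simplex q n \<and> 2 \<le> card C"

inductive impair :: "nat \<Rightarrow> nat list \<Rightarrow> nat \<Rightarrow> nat \<Rightarrow> nat \<Rightarrow> nat list \<Rightarrow> bool"
  for q :: nat where
  refl: "impair q x 0 0 0 x"
| ins: "impair q x i d s y \<Longrightarrow> k < length y \<Longrightarrow>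
        impair q x (Suc i) d s (y[k := y ! k + 1])"
| del: "impair q x i d s y \<Longrightarrow> k < length y \<Longrightarrow> 1 \<le> y ! k \<Longrightarrow>
        impair q x i (Suc d) s (y[k := y ! k - 1])"
| sub: "impair q x i d s y \<Longrightarrow> k < length y \<Longrightarrow> l < length y \<Longrightarrow> 1 \<le> y ! k \<Longrightarrow>
        impair q x i d (Suc s) ((y[k := y ! k - 1])[l := (y[k := y ! k - 1]) ! l + 1])"

definition outputs :: "nat \<Rightarrow> nat \<Rightarrow> nat \<Rightarrow> nat \<Rightarrow> nat list \<Rightarrow> nat list set" where
  "outputs q a b c x = {y. \<exists>i d s. i \<le> a \<and> d \<le> b \<and> s \<le> c \<and> impair q x i d s y}"

definition corrects :: "nat \<Rightarrow> nat \<Rightarrow> nat \<Rightarrow> nat \<Rightarrow> nat list set \<Rightarrow> bool" where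
  "corrects q a b c C \<longleftrightarrow>
     (\<forall>x\<in>C. \<forall>y\<in>C. x \<noteq> y \<longrightarrow> outputs q a b c x \<inter> outputs q a b c y = {})"

end

theory Submission
  imports Defs
begin

definition LL :: "nat list \<Rightarrow> nat list \<Rightarrow> int" where
  "LL x y = (\<Sum>j<length x. \<bar>int (x!j) - int (y!j)\<bar>)"

definition SS :: "nat list \<Rightarrow> int" where
  "SS x = (\<Sum>j<length x. int (x!j))"

lemma sum_upd:
  fixes n :: nat
  assumes "k < n" and "\<And>j. j \<noteq> k \<Longrightarrow> f j = g j"
  shows "(\<Sum>j<n. f j) = (\<Sum>j<n. g j) + f k - (g k :: int)"
proof -
  have a: "(\<Sum>j<n. f j) = f k + (\<Sum>j\<in>{..<n}-{k}. f j)"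
    using assms(1) sum.remove[of "{..<n}" k f] by simp
  have b: "(\<Sum>j<n. g j) = g k + (\<Sum>j\<in>{..<n}-{k}. g j)"
    using assms(1) sum.remove[of "{..<n}" k g] by simp
  have c: "(\<Sum>j\<in>{..<n}-{k}. f j) = (\<Sum>j\<in>{..<n}-{k}. g j)"
    using assms(2) by (intro sum.cong) auto
  show ?thesis using a b c by simp
qed

lemma LL_upd1:
  assumes "k < length x"
  shows "LL (x[k:=v]) y = LL x y + \<bar>int v - int (y!k)\<bar> - \<bar>int (x!k) - int (y!k)\<bar>"
proof -
  have "(\<Sum>j<length x. \<bar>int (x[k:=v]!j) - int (y!j)\<bar>) = (\<Sum>j<length x. \<bar>int (x!j) - int (y!j)\<bar>)
     + \<bar>int (x[k:=v]!k) - int (y!k)\<bar> - \<bar>int (x!k) - int (y!k)\<bar>"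
    by (rule sum_upd[OF assms]) simp
  then show ?thesis using assms by (simp add: LL_def)
qed

lemma LL_upd2:
  assumes "k < length x" "length y = length x"
  shows "LL x (y[k:=v]) = LL x y + \<bar>int (x!k) - int v\<bar> - \<bar>int (x!k) - int (y!k)\<bar>"
proof -
  have "(\<Sum>j<length x. \<bar>int (x!j) - int (y[k:=v]!j)\<bar>) = (\<Sum>j<length x. \<bar>int (x!j) - int (y!j)\<bar>)
     + \<bar>int (x!k) - int (y[k:=v]!k)\<bar> - \<bar>int (x!k) - int (y!k)\<bar>"
    by (rule sum_upd[OF assms(1)]) simp
  then show ?thesis using assms by (simp add: LL_def)
qed

lemma SS_upd:
  assumes "k < length x"
  shows "SS (x[k:=v]) = SS x + int v - int (x!k)"
proof -
  have "(\<Sum>j<length x. int (x[k:=v]!j)) = (\<Sum>j<length x. int (x!j)) + int (x[k:=v]!k) - int (x!k)"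
    by (rule sum_upd[OF assms]) simp
  then show ?thesis using assms by (simp add: SS_def)
qed

lemma LL_tri:
  assumes "length y = length x" "length z = length x"
  shows "LL x y \<le> LL x z + LL y z"
proof -
  have "LL x y \<le> (\<Sum>j<length x. \<bar>int (x!j) - int (z!j)\<bar> + \<bar>int (y!j) - int (z!j)\<bar>)"
    unfolding LL_def by (rule sum_mono) arith
  also have "\<dots> = LL x z + LL y z" unfolding LL_def using assms by (simp add: sum.distrib)
  finally show ?thesis .
qed

lemma LL_ge:
  assumes "k < length x"
  shows "\<bar>int (x!k) - int (y!k)\<bar> \<le> LL x y"
  unfolding LL_def by (rule member_le_sum) (use assms in auto)

lemma impair_length: "impair q x i d s y \<Longrightarrow> length y = length x"
  by (induction rule: impair.induct) auto

lemma impair_trans: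
  assumes "impair q y i' d' s' z" "impair q x i d s y"
  shows "impair q x (i+i') (d+d') (s+s') z"
  using assms
proof (induction rule: impair.induct)
  case (refl x)
  then show ?case by simp
next
  case (ins y0 i0 d0 s0 w k)
  show ?case unfolding add_Suc_right by (rule impair.ins) (use ins in auto)
next
  case (del y0 i0 d0 s0 w k)
  show ?case unfolding add_Suc_right by (rule impair.del) (use del in auto)
next
  case (sub y0 i0 d0 s0 w k l)
  show ?case unfolding add_Suc_right by (rule impair.sub) (use sub in auto)
qed

lemma impair_LL: "impair q x i d s z \<Longrightarrow> LL x z \<le> int i + int d + 2 * int s"
proof (induction rule: impair.induct)
  case (refl x)
  then show ?case by (simp add: LL_def)
next
  case (ins x i d s y k)
  have l: "length y = length x" using ins.hyps(1) by (rule impair_length)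
  have "LL x (y[k := y ! k + 1]) = LL x y + \<bar>int (x!k) - int (y!k + 1)\<bar> - \<bar>int (x!k) - int (y!k)\<bar>"
    using ins.hyps(2) l by (intro LL_upd2) auto
  moreover have c1: "int (y!k + 1) = int (y!k) + 1" by simp
  moreover have t1: "\<bar>int (x!k) - (int (y!k) + 1)\<bar> \<le> \<bar>int (x!k) - int (y!k)\<bar> + 1" by arith
  ultimately have "LL x (y[k := y ! k + 1]) \<le> LL x y + 1" by linarith
  then show ?case using ins.IH by simp
next
  case (del x i d s y k)
  have l: "length y = length x" using del.hyps(1) by (rule impair_length)
  have "LL x (y[k := y ! k - 1]) = LL x y + \<bar>int (x!k) - int (y!k - 1)\<bar> - \<bar>int (x!k) - int (y!k)\<bar>"
    using del.hyps(2) l by (intro LL_upd2) auto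
  moreover have c1: "int (y!k - 1) = int (y!k) - 1" using del.hyps(3) by simp
  moreover have t1: "\<bar>int (x!k) - (int (y!k) - 1)\<bar> \<le> \<bar>int (x!k) - int (y!k)\<bar> + 1" by arith
  ultimately have "LL x (y[k := y ! k - 1]) \<le> LL x y + 1" by linarith
  then show ?case using del.IH by simp
next
  case (sub x i d s y k l)
  have ly: "length y = length x" using sub.hyps(1) by (rule impair_length)
  define y1 where "y1 = y[k := y ! k - 1]"
  have ly1: "length y1 = length x" using ly by (simp add: y1_def)
  have e1: "LL x y1 = LL x y + \<bar>int (x!k) - int (y!k - 1)\<bar> - \<bar>int (x!k) - int (y!k)\<bar>"
    unfolding y1_def using sub.hyps(2) ly by (intro LL_upd2) auto
  have e2: "LL x (y1[l := y1!l + 1]) = LL x y1 + \<bar>int (x!l) - int (y1!l + 1)\<bar> - \<bar>int (x!l) - int (y1!l)\<bar>"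
    using sub.hyps(3) ly ly1 by (intro LL_upd2) auto
  have c1: "int (y!k - 1) = int (y!k) - 1" using sub.hyps(4) by simp
  have t1: "\<bar>int (x!k) - (int (y!k) - 1)\<bar> \<le> \<bar>int (x!k) - int (y!k)\<bar> + 1" by arith
  have t2: "\<bar>int (x!l) - int (y1!l + 1)\<bar> \<le> \<bar>int (x!l) - int (y1!l)\<bar> + 1" by arith
  have cs: "int (Suc s) = int s + 1" by simp
  have "LL x (y1[l := y1!l + 1]) \<le> int i + int d + 2 * int (Suc s)"
  proof -
    have A: "LL x y1 \<le> LL x y + 1" using e1[unfolded c1] t1 by linarith
    have B: "LL x (y1[l := y1!l + 1]) \<le> LL x y1 + 1" using e2 t2 by linarith
    show ?thesis using A B sub.IH by simp
  qed
  then show ?case unfolding y1_def .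
qed

lemma exists_gt:
  assumes "length x = length y" "SS x = SS y" "x \<noteq> y"
  shows "\<exists>k<length x. x!k > y!k"
proof (rule ccontr)
  assume "\<not> ?thesis"
  hence le: "\<And>k. k < length x \<Longrightarrow> x!k \<le> y!k" by auto
  obtain j where j: "j < length x" "x!j \<noteq> y!j" using assms(1,3) nth_equalityI by blast
  have "(\<Sum>k<length x. int (x!k)) < (\<Sum>k<length x. int (y!k))"
    by (rule sum_strict_mono_ex1) (use le j in \<open>auto simp: le_less\<close>)
  thus False using assms(1,2) by (simp add: SS_def)
qed


lemma exists_lt:
  assumes "length x = length y" "SS x = SS y" "x \<noteq> y"
  shows "\<exists>k<length x. x!k < y!k"
  using exists_gt[of y x] assms by auto

lemma one_ins: "k < length x \<Longrightarrow> impair q x 1 0 0 (x[k := x!k + 1])"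
  using impair.ins[OF impair.refl[of q x], of k] by simp

lemma one_del: "k < length x \<Longrightarrow> 1 \<le> x!k \<Longrightarrow> impair q x 0 1 0 (x[k := x!k - 1])"
  using impair.del[OF impair.refl[of q x], of k] by simp

lemma one_sub: "k < length x \<Longrightarrow> l < length x \<Longrightarrow> 1 \<le> x!k \<Longrightarrow>
   impair q x 0 0 1 ((x[k := x ! k - 1])[l := (x[k := x ! k - 1]) ! l + 1])"
  using impair.sub[OF impair.refl[of q x], of k l] by simp

lemma common:
  "a + b + c1 + c2 = N \<Longrightarrow> length x = length y \<Longrightarrow> SS x = SS y \<Longrightarrow> LL x y \<le> 2 * int N \<Longrightarrow>
   \<exists>z i d s i' d' s'. i \<le> a \<and> d \<le> b \<and> s \<le> c1 \<and> i' \<le> a \<and> d' \<le> b \<and> s' \<le> c2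
      \<and> impair q x i d s z \<and> impair q y i' d' s' z"
proof (induction N arbitrary: x y a b c1 c2 rule: less_induct)
  case (less N x y a b c1 c2)
  show ?case
  proof (cases "x = y")
    case True
    then show ?thesis by (intro exI[of _ x] exI[of _ 0]) (simp add: impair.refl)
  next
    case False
    obtain k where k: "k < length x" "x!k > y!k" using exists_gt[OF less.prems(2,3) False] by blast
    obtain l where l: "l < length x" "x!l < y!l" using exists_lt[OF less.prems(2,3) False] by blast
    have kl: "k \<noteq> l" using k l by auto
    have ky: "k < length y" "l < length y" using k l less.prems(2) by auto
    have k1: "1 \<le> x!k" and l1: "1 \<le> y!l" using k(2) l(2) by auto
    have Lpos: "LL x y \<ge> 1" using LL_ge[OF k(1), of y] k(2) by linarith
    consider "a > 0" | "a = 0" "b > 0" | "a = 0" "b = 0" "c1 > 0" | "a = 0" "b = 0" "c1 = 0" "c2 > 0"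
      | "a = 0" "b = 0" "c1 = 0" "c2 = 0" by auto
    then show ?thesis
    proof cases
      case 1
      define x' where "x' = x[l := x!l + 1]"
      define y' where "y' = y[k := y!k + 1]"
      have e1: "LL x y' = LL x y + \<bar>int (x!k) - int (y!k + 1)\<bar> - \<bar>int (x!k) - int (y!k)\<bar>"
        unfolding y'_def using k less.prems(2) by (intro LL_upd2) auto
      have y'l: "y'!l = y!l" unfolding y'_def using kl by simp
      have e2: "LL x' y' = LL x y' + \<bar>int (x!l + 1) - int (y'!l)\<bar> - \<bar>int (x!l) - int (y'!l)\<bar>"
        unfolding x'_def using l by (intro LL_upd1) auto
      have a1: "\<bar>int (x!k) - int (y!k + 1)\<bar> = \<bar>int (x!k) - int (y!k)\<bar> - 1" using k(2) by arith
      have a2: "\<bar>int (x!l + 1) - int (y!l)\<bar> = \<bar>int (x!l) - int (y!l)\<bar> - 1" using l(2) by arith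
      have nN: "int (N - 1) = int N - 1" using less.prems(1) 1 by arith
      have Nlt: "N - 1 < N" using less.prems(1) 1 by arith
      have eq: "(a - 1) + b + c1 + c2 = N - 1" using less.prems(1) 1 by arith
      have L': "LL x' y' \<le> 2 * int (N - 1)" using e1 e2[unfolded y'l] a1 a2 nN less.prems(4) by linarith
      have S': "SS x' = SS y'" unfolding x'_def y'_def using SS_upd k ky l less.prems(3) by simp
      have len': "length x' = length y'" unfolding x'_def y'_def using less.prems(2) by simp
      obtain z i d s i' d' s' where h: "i \<le> a - 1" "d \<le> b" "s \<le> c1" "i' \<le> a - 1" "d' \<le> b" "s' \<le> c2"
        "impair q x' i d s z" "impair q y' i' d' s' z"
        using less.IH[OF Nlt eq len' S' L'] by blast
      have hx: "impair q x (1 + i) (0 + d) (0 + s) z"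
        using impair_trans[OF h(7)[unfolded x'_def] one_ins[OF l(1)]] .
      have hy: "impair q y (1 + i') (0 + d') (0 + s') z"
        using impair_trans[OF h(8)[unfolded y'_def] one_ins[OF ky(1)]] .
      show ?thesis by (rule exI[of _ z], rule exI[of _ "1+i"], rule exI[of _ "0+d"], rule exI[of _ "0+s"], rule exI[of _ "1+i'"], rule exI[of _ "0+d'"], rule exI[of _ "0+s'"], intro conjI hx hy) (use h(1-6) 1 in linarith)+
    next
      case 2
      define x' where "x' = x[k := x!k - 1]"
      define y' where "y' = y[l := y!l - 1]"
      have e1: "LL x y' = LL x y + \<bar>int (x!l) - int (y!l - 1)\<bar> - \<bar>int (x!l) - int (y!l)\<bar>"
        unfolding y'_def using l less.prems(2) by (intro LL_upd2) auto
      have y'k: "y'!k = y!k" unfolding y'_def using kl by simp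
      have e2: "LL x' y' = LL x y' + \<bar>int (x!k - 1) - int (y'!k)\<bar> - \<bar>int (x!k) - int (y'!k)\<bar>"
        unfolding x'_def using k by (intro LL_upd1) auto
      have a1: "\<bar>int (x!l) - int (y!l - 1)\<bar> = \<bar>int (x!l) - int (y!l)\<bar> - 1" using l(2) by arith
      have a2: "\<bar>int (x!k - 1) - int (y!k)\<bar> = \<bar>int (x!k) - int (y!k)\<bar> - 1" using k(2) by arith
      have nN: "int (N - 1) = int N - 1" using less.prems(1) 2 by arith
      have Nlt: "N - 1 < N" using less.prems(1) 2 by arith
      have eq: "a + (b - 1) + c1 + c2 = N - 1" using less.prems(1) 2 by arith
      have L': "LL x' y' \<le> 2 * int (N - 1)" using e1 e2[unfolded y'k] a1 a2 nN less.prems(4) by linarith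
      have S': "SS x' = SS y'" unfolding x'_def y'_def using SS_upd k ky l less.prems(3)
        by (simp add: of_nat_diff)
      have len': "length x' = length y'" unfolding x'_def y'_def using less.prems(2) by simp
      obtain z i d s i' d' s' where h: "i \<le> a" "d \<le> b - 1" "s \<le> c1" "i' \<le> a" "d' \<le> b - 1" "s' \<le> c2"
        "impair q x' i d s z" "impair q y' i' d' s' z"
        using less.IH[OF Nlt eq len' S' L'] by blast
      have hx: "impair q x (0 + i) (1 + d) (0 + s) z"
        using impair_trans[OF h(7)[unfolded x'_def] one_del[OF k(1) k1]] .
      have hy: "impair q y (0 + i') (1 + d') (0 + s') z"
        using impair_trans[OF h(8)[unfolded y'_def] one_del[OF ky(2) l1]] .
      show ?thesis by (rule exI[of _ z], rule exI[of _ "0+i"], rule exI[of _ "1+d"], rule exI[of _ "0+s"], rule exI[of _ "0+i'"], rule exI[of _ "1+d'"], rule exI[of _ "0+s'"], intro conjI hx hy) (use h(1-6) 2 in linarith)+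
    next
      case 3
      define x1 where "x1 = x[k := x!k - 1]"
      define x' where "x' = x1[l := x1!l + 1]"
      have x1l: "x1!l = x!l" unfolding x1_def using kl by simp
      have e1: "LL x1 y = LL x y + \<bar>int (x!k - 1) - int (y!k)\<bar> - \<bar>int (x!k) - int (y!k)\<bar>"
        unfolding x1_def using k by (intro LL_upd1) auto
      have e2: "LL x' y = LL x1 y + \<bar>int (x1!l + 1) - int (y!l)\<bar> - \<bar>int (x1!l) - int (y!l)\<bar>"
        unfolding x'_def using l by (intro LL_upd1) (auto simp: x1_def)
      have a1: "\<bar>int (x!l + 1) - int (y!l)\<bar> = \<bar>int (x!l) - int (y!l)\<bar> - 1" using l(2) by arith
      have a2: "\<bar>int (x!k - 1) - int (y!k)\<bar> = \<bar>int (x!k) - int (y!k)\<bar> - 1" using k(2) by arith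
      have nN: "int (N - 1) = int N - 1" using less.prems(1) 3 by arith
      have Nlt: "N - 1 < N" using less.prems(1) 3 by arith
      have eq: "a + b + (c1 - 1) + c2 = N - 1" using less.prems(1) 3 by arith
      have L': "LL x' y \<le> 2 * int (N - 1)" using e1 e2[unfolded x1l] a1 a2 nN less.prems(4) by linarith
      have S': "SS x' = SS y" unfolding x'_def using SS_upd[of l x1] SS_upd[of k x] k l x1l less.prems(3)
        by (simp add: x1_def of_nat_diff)
      have len': "length x' = length y" unfolding x'_def x1_def using less.prems(2) by simp
      obtain z i d s i' d' s' where h: "i \<le> a" "d \<le> b" "s \<le> c1 - 1" "i' \<le> a" "d' \<le> b" "s' \<le> c2"
        "impair q x' i d s z" "impair q y i' d' s' z"
        using less.IH[OF Nlt eq len' S' L'] by blast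
      have hx: "impair q x (0 + i) (0 + d) (1 + s) z"
        using impair_trans[OF h(7)[unfolded x'_def x1_def] one_sub[OF k(1) l(1) k1]] .
      show ?thesis by (rule exI[of _ z], rule exI[of _ "0+i"], rule exI[of _ "0+d"], rule exI[of _ "1+s"], rule exI[of _ "i'"], rule exI[of _ "d'"], rule exI[of _ "s'"], intro conjI hx h(8)) (use h(1-6) 3 in linarith)+
    next
      case 4
      define y1 where "y1 = y[l := y!l - 1]"
      define y' where "y' = y1[k := y1!k + 1]"
      have y1k: "y1!k = y!k" unfolding y1_def using kl by simp
      have e1: "LL x y1 = LL x y + \<bar>int (x!l) - int (y!l - 1)\<bar> - \<bar>int (x!l) - int (y!l)\<bar>"
        unfolding y1_def using l less.prems(2) by (intro LL_upd2) auto
      have e2: "LL x y' = LL x y1 + \<bar>int (x!k) - int (y1!k + 1)\<bar> - \<bar>int (x!k) - int (y1!k)\<bar>"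
        unfolding y'_def using k less.prems(2) by (intro LL_upd2) (auto simp: y1_def)
      have a1: "\<bar>int (x!l) - int (y!l - 1)\<bar> = \<bar>int (x!l) - int (y!l)\<bar> - 1" using l(2) by arith
      have a2: "\<bar>int (x!k) - int (y!k + 1)\<bar> = \<bar>int (x!k) - int (y!k)\<bar> - 1" using k(2) by arith
      have nN: "int (N - 1) = int N - 1" using less.prems(1) 4 by arith
      have Nlt: "N - 1 < N" using less.prems(1) 4 by arith
      have eq: "a + b + c1 + (c2 - 1) = N - 1" using less.prems(1) 4 by arith
      have L': "LL x y' \<le> 2 * int (N - 1)" using e1 e2[unfolded y1k] a1 a2 nN less.prems(4) by linarith
      have S': "SS x = SS y'" unfolding y'_def using SS_upd[of k y1] SS_upd[of l y] ky l y1k less.prems(3)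
        by (simp add: y1_def of_nat_diff)
      have len': "length x = length y'" unfolding y'_def y1_def using less.prems(2) by simp
      obtain z i d s i' d' s' where h: "i \<le> a" "d \<le> b" "s \<le> c1" "i' \<le> a" "d' \<le> b" "s' \<le> c2 - 1"
        "impair q x i d s z" "impair q y' i' d' s' z"
        using less.IH[OF Nlt eq len' S' L'] by blast
      have hy: "impair q y (0 + i') (0 + d') (1 + s') z"
        using impair_trans[OF h(8)[unfolded y'_def y1_def] one_sub[OF ky(2) ky(1) l1]] .
      show ?thesis by (rule exI[of _ z], rule exI[of _ "i"], rule exI[of _ "d"], rule exI[of _ "s"], rule exI[of _ "0+i'"], rule exI[of _ "0+d'"], rule exI[of _ "1+s'"], intro conjI h(7) hy) (use h(1-6) 4 in linarith)+
    next
      case 5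
      then show ?thesis using less.prems(1,4) Lpos by simp
    qed
  qed
qed

lemma corrects_iff:
  assumes "C \<subseteq> simplex q n"
  shows "corrects q a b c C \<longleftrightarrow>
    (\<forall>x\<in>C. \<forall>y\<in>C. x \<noteq> y \<longrightarrow> LL x y > 2 * int (a + b + 2 * c))"
proof
  assume cor: "corrects q a b c C"
  show "\<forall>x\<in>C. \<forall>y\<in>C. x \<noteq> y \<longrightarrow> LL x y > 2 * int (a + b + 2 * c)"
  proof (intro ballI impI)
    fix x y assume xy: "x \<in> C" "y \<in> C" "x \<noteq> y"
    show "LL x y > 2 * int (a + b + 2 * c)"
    proof (rule ccontr)
      assume "\<not> ?thesis"
      hence L: "LL x y \<le> 2 * int (a + b + c + c)" by simp
      have len: "length x = length y" using xy assms by (auto simp: simplex_def)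
      have "SS x = int (sum_list x)" "SS y = int (sum_list y)"
        by (simp_all add: SS_def sum_list_sum_nth atLeast0LessThan)
      hence S: "SS x = SS y" using xy assms by (auto simp: simplex_def)
      obtain z i d s i' d' s' where h: "i \<le> a" "d \<le> b" "s \<le> c" "i' \<le> a" "d' \<le> b" "s' \<le> c"
        "impair q x i d s z" "impair q y i' d' s' z"
        using common[OF HOL.refl len S L] by blast
      have "z \<in> outputs q a b c x \<inter> outputs q a b c y" using h unfolding outputs_def by blast
      thus False using cor xy unfolding corrects_def by blast
    qed
  qed
next
  assume good: "\<forall>x\<in>C. \<forall>y\<in>C. x \<noteq> y \<longrightarrow> LL x y > 2 * int (a + b + 2 * c)"
  show "corrects q a b c C" unfolding corrects_def
  proof (intro ballI impI)
    fix x y assume xy: "x \<in> C" "y \<in> C" "x \<noteq> y"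
    show "outputs q a b c x \<inter> outputs q a b c y = {}"
    proof (rule ccontr)
      assume "\<not> ?thesis"
      then obtain z i d s i' d' s' where h: "i \<le> a" "d \<le> b" "s \<le> c" "i' \<le> a" "d' \<le> b" "s' \<le> c"
        "impair q x i d s z" "impair q y i' d' s' z" unfolding outputs_def by blast
      have len: "length x = length y" using xy assms by (auto simp: simplex_def)
      have lz: "length z = length x" "length z = length y"
        using impair_length[OF h(7)] impair_length[OF h(8)] by auto
      have "LL x y \<le> LL x z + LL y z" using LL_tri[of y x z] len lz by simp
      also have "\<dots> \<le> 2 * int (a + b + 2 * c)"
        using impair_LL[OF h(7)] impair_LL[OF h(8)] h(1-6) by simp
      finally show False using good xy by force
    qed
  qed
qed

theorem mainTheorem1:
  fixes q n h_ins h_del h_sub h :: nat and C :: "nat list set"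
  assumes "q \<ge> 2" and "n \<ge> 1" and "multiset_code q n C"
    and "h = h_ins + h_del + 2 * h_sub"
  shows "(corrects q h_ins h_del h_sub C \<longleftrightarrow> corrects q h 0 0 C)
       \<and> (corrects q h 0 0 C \<longleftrightarrow> corrects q 0 h 0 C)"
proof -
  have C: "C \<subseteq> simplex q n" using assms(3) by (simp add: multiset_code_def)
  show ?thesis using corrects_iff[OF C, of h_ins h_del h_sub] corrects_iff[OF C, of h 0 0]
      corrects_iff[OF C, of 0 h 0] assms(4) by simp
qed

end
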